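(* Let $0<q<1$, let $r\ge1$, $s\ge1$ be integers with $r-1\le s$, and $\alpha\in\mathbb{R}\setminus\mathbb{Z}_-$. Let $a_j>0$ real and $b_j\in\mathbb{C}$ ($j=1,\dots,r-1$), and $c_\ell>0$ real and $d_\ell\in\mathbb{C}$ ($\ell=1,\dots,s-1$), with $a_jn+\mathrm{Re}(b_j)\notin\mathbb{Z}_-$ and $c_\ell n+\mathrm{Re}(d_\ell)\notin\mathbb{Z}_-$ for all positive integers $n$ (when $r=1$ there are no $a_j,b_j$; when $s=1$ there are no $c_\ell,d_\ell$). Then for every $z\in\mathbb{C}$, $$\lim_{n\to+\infty}{}_r\phi_s\!\left(\begin{array}{c}q^{-n},q^{a_1n+b_1},\dots,q^{a_{r-1}n+b_{r-1}}\\ q^{\alpha},q^{c_1n+d_1},\dots,q^{c_{s-1}n+d_{s-1}}\end{array};q,q^nz\right)=\sum_{k=0}^{\infty}\frac{(-1)^{(r-s)k}q^{(2+s-r)\binom k2}}{(q^{\alpha};q)_k(q;q)_k}z^k.$$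
   Context: $\mathbb{Z}_-=\{0,-1,-2,\dots\}$. For $w\in\mathbb{C}$, $q^{w}:=e^{w\ln q}$. For $a\in\mathbb{C}$: $(a;q)_0=1$, $(a;q)_k=\prod_{j=0}^{k-1}(1-aq^{j})$, and $(a_1,\dots,a_r;q)_k=\prod_{i=1}^r(a_i;q)_k$. The basic hypergeometric series is $${}_r\phi_s\!\left(\begin{array}{c}a_1,\dots,a_r\\ b_1,\dots,b_s\end{array};q,z\right)=\sum_{k=0}^{\infty}\frac{(a_1,\dots,a_r;q)_k}{(b_1,\dots,b_s;q)_k}(-1)^{(1+s-r)k}q^{(1+s-r)\binom{k}{2}}\frac{z^k}{(q;q)_k};$$ when one numerator parameter is $q^{-n}$ it is a polynomial in $z$ of degree at most $n$. *)

theory Defs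
  imports "HOL-Analysis.Analysis"
begin

definition qpow :: "real \<Rightarrow> complex \<Rightarrow> complex" where
  "qpow q w = exp (w * of_real (ln q))"

definition qpoch :: "complex \<Rightarrow> real \<Rightarrow> nat \<Rightarrow> complex" where
  "qpoch a q k = (\<Prod>j<k. 1 - a * of_real (q ^ j))"

definition basic_hyp :: "complex list \<Rightarrow> complex list \<Rightarrow> real \<Rightarrow> complex \<Rightarrow> complex" where
  "basic_hyp as bs q z =
     (let e = 1 + int (length bs) - int (length as) in
      (\<Sum>k. (\<Prod>a\<leftarrow>as. qpoch a q k) / (\<Prod>b\<leftarrow>bs. qpoch b q k)
            * ((-1) powi (e * int k)) * of_real (q powi (e * int (k choose 2)))
            * z ^ k / qpoch (of_real q) q k))"

end

theory Submission
  imports Defs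
begin


lemma qpoch_upper:
  assumes q: "0 < q" "q < 1" and x: "norm x \<le> 1"
  shows "norm (qpoch x q k) \<le> 2 ^ k"
proof -
  have "norm (qpoch x q k) = (\<Prod>j<k. norm (1 - x * of_real (q ^ j)))"
    unfolding qpoch_def by (simp add: prod_norm)
  also have "\<dots> \<le> (\<Prod>j<k. 2)"
  proof (rule prod_mono)
    fix j assume "j \<in> {..<k}"
    have "norm (1 - x * of_real (q ^ j)) \<le> 1 + norm x * q ^ j"
      using norm_triangle_ineq4[of 1 "x * of_real (q ^ j)"] q by (simp add: norm_mult norm_power)
    also have "\<dots> \<le> 2" using x q by (smt (verit) mult_le_one norm_ge_zero power_le_one zero_le_power)
    finally show "0 \<le> norm (1 - x * of_real (q ^ j)) \<and> norm (1 - x * of_real (q ^ j)) \<le> 2" by simp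
  qed
  finally show ?thesis by simp
qed

lemma qpoch_factor_lower:
  fixes y :: complex
  assumes q: "0 < q" "q < 1" and y: "norm y * q ^ j \<le> 1/2"
  shows "norm (1 - y * of_real (q ^ j)) \<ge> 1/2"
proof -
  have "1 - norm y * q ^ j \<le> norm (1 - y * of_real (q ^ j))"
    using norm_triangle_ineq2[of 1 "y * of_real (q ^ j)"] q by (simp add: norm_mult norm_power)
  then show ?thesis using y by linarith
qed

lemma qpoch_lower_from:
  assumes q: "0 < q" "q < 1" and y: "norm y * q ^ J \<le> 1/2" and k: "J \<le> k"
  shows "norm (qpoch y q k) \<ge> norm (qpoch y q J) * (1/2) ^ (k - J)"
  using k
proof (induction k rule: dec_induct)
  case base then show ?case by simp
next
  case (step k)
  have "norm y * q ^ k \<le> norm y * q ^ J"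
    using step q by (intro mult_left_mono power_decreasing) auto
  have f: "norm (1 - y * of_real (q ^ k)) \<ge> 1/2"
    by (rule qpoch_factor_lower[OF q]) (use y \<open>norm y * q ^ k \<le> norm y * q ^ J\<close> in linarith)
  have "qpoch y q (Suc k) = qpoch y q k * (1 - y * of_real (q ^ k))"
    unfolding qpoch_def by simp
  then have "norm (qpoch y q (Suc k)) = norm (qpoch y q k) * norm (1 - y * of_real (q ^ k))"
    by (simp add: norm_mult)
  also have "\<dots> \<ge> norm (qpoch y q J) * (1/2) ^ (k - J) * (1/2)"
    using step.IH f by (intro mult_mono) auto
  finally show ?case using step(1) by (simp add: Suc_diff_le)
qed

lemma qpoch_lower_half:
  assumes q: "0 < q" "q < 1" and y: "norm y \<le> 1/2"
  shows "norm (qpoch y q k) \<ge> (1/2) ^ k"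
  using qpoch_lower_from[OF q, of y 0 k] y by (simp add: qpoch_def)

lemma qpoch_q_lower:
  assumes q: "0 < q" "q < 1"
  shows "norm (qpoch (of_real q) q k) \<ge> (1 - q) ^ k"
proof -
  have "norm (qpoch (of_real q) q k) = (\<Prod>j<k. norm (1 - of_real q * of_real (q ^ j) :: complex))"
    unfolding qpoch_def by (simp add: prod_norm)
  also have "\<dots> \<ge> (\<Prod>j<k. 1 - q)"
  proof (rule prod_mono)
    fix j assume "j \<in> {..<k}"
    have "q * q ^ j \<le> q" using q by (simp add: mult_left_le power_le_one)
    moreover have "(1 - of_real q * of_real (q ^ j) :: complex) = of_real (1 - q * q ^ j)" by simp
    moreover have "q * q ^ j \<le> 1" using q by (simp add: mult_le_one power_le_one)
    ultimately show "0 \<le> 1 - q \<and> 1 - q \<le> norm (1 - of_real q * of_real (q ^ j) :: complex)"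
      using q by (simp del: of_real_diff of_real_mult)
  qed
  finally show ?thesis by simp
qed

lemma qpoch_tendsto_one:
  assumes "f \<longlonglongrightarrow> 0"
  shows "(\<lambda>n. qpoch (f n) q k) \<longlonglongrightarrow> 1"
proof -
  have "(\<lambda>n. \<Prod>j<k. 1 - f n * of_real (q ^ j)) \<longlonglongrightarrow> (\<Prod>j<k. 1 - 0 * of_real (q ^ j))"
    by (intro tendsto_prod tendsto_intros assms)
  then show ?thesis unfolding qpoch_def by simp
qed

lemma qpow_tendsto_zero:
  assumes q: "0 < q" "q < 1" and a: "a > 0"
  shows "(\<lambda>n. qpow q (of_real (a * real n) + b)) \<longlonglongrightarrow> 0"
proof (rule tendsto_norm_zero_cancel)
  have eq: "norm (qpow q (of_real (a * real n) + b)) = exp (Re b * ln q) * exp (a * ln q) ^ n" for n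
  proof -
    have "norm (qpow q (of_real (a * real n) + b)) = exp ((a * real n + Re b) * ln q)"
      unfolding qpow_def by simp
    also have "\<dots> = exp (Re b * ln q) * exp (real n * (a * ln q))"
      by (simp add: algebra_simps flip: exp_add)
    also have "\<dots> = exp (Re b * ln q) * exp (a * ln q) ^ n"
      by (simp add: exp_of_nat_mult)
    finally show ?thesis .
  qed
  have "a * ln q < 0" using q a by (simp add: mult_pos_neg)
  then have "exp (a * ln q) < 1" by simp
  have "(\<lambda>n. exp (a * ln q) ^ n) \<longlonglongrightarrow> 0"
    by (rule LIMSEQ_power_zero) (use \<open>exp (a * ln q) < 1\<close> in \<open>simp only: real_norm_def abs_exp_cancel\<close>)
  then have "(\<lambda>n. exp (Re b * ln q) * exp (a * ln q) ^ n) \<longlonglongrightarrow> exp (Re b * ln q) * 0"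
    by (rule tendsto_mult_left)
  then show "(\<lambda>n. norm (qpow q (of_real (a * real n) + b))) \<longlonglongrightarrow> 0"
    unfolding eq by simp
qed

lemma sum_lessThan_choose2: "(\<Sum>j<k. j) = k choose 2"
proof (induction k)
  case (Suc k)
  have "Suc k choose 2 = k + (k choose 2)"
    using binomial_Suc_Suc[of k 1] by (simp add: numeral_2_eq_2)
  then show ?case using Suc by simp
qed simp

lemma minus_one_powi: "((-1::complex) powi m) = (if even m then 1 else -1)"
proof (cases "m \<ge> 0")
  case True
  then obtain N where "m = int N" using nonneg_eq_int by blast
  then show ?thesis by (simp add: power_int_def)
next
  case False
  then show ?thesis by (simp add: power_int_def even_nat_iff)
qed

lemma prod_q_pow: "(\<Prod>j<k. (q::real) ^ j) = q ^ (k choose 2)"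
  by (simp add: power_sum[symmetric] sum_lessThan_choose2)

lemma qpow_neg_nat: "qpow q (- of_nat n) = of_real (inverse (q ^ n))" if "0 < q"
proof -
  have "qpow q (- of_nat n) = of_real (exp (- real n * ln q))"
    unfolding qpow_def by (simp flip: exp_of_real)
  also have "exp (- real n * ln q) = inverse (exp (ln q) ^ n)"
    by (simp add: exp_minus exp_of_nat_mult)
  finally show ?thesis using that by simp
qed

lemma W_eq:
  assumes "0 < q"
  shows "qpoch (qpow q (- of_nat n)) q k * of_real (q ^ n) ^ k
         = (\<Prod>j<k. (of_real (q ^ n) - of_real (q ^ j) :: complex))"
proof -
  have "qpoch (qpow q (- of_nat n)) q k * of_real (q ^ n) ^ k
        = (\<Prod>j<k. (1 - of_real (inverse (q ^ n)) * of_real (q ^ j))) * (\<Prod>j<k. (of_real (q ^ n) :: complex))"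
    unfolding qpoch_def qpow_neg_nat[OF assms] by simp
  also have "\<dots> = (\<Prod>j<k. (1 - of_real (inverse (q ^ n)) * of_real (q ^ j)) * of_real (q ^ n))"
    by (simp add: prod.distrib)
  also have "\<dots> = (\<Prod>j<k. (of_real (q ^ n) - of_real (q ^ j) :: complex))"
    using assms by (intro prod.cong refl) (simp add: field_simps)
  finally show ?thesis .
qed

lemma W_bound:
  assumes q: "0 < q" "q < 1"
  shows "norm (\<Prod>j<k. (of_real (q ^ n) - of_real (q ^ j) :: complex)) \<le> q ^ (k choose 2)"
proof (cases "k \<le> n")
  case True
  have "norm (\<Prod>j<k. (of_real (q ^ n) - of_real (q ^ j) :: complex)) = (\<Prod>j<k. norm (of_real (q ^ n) - of_real (q ^ j) :: complex))"
    by (simp add: prod_norm)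
  also have "\<dots> \<le> (\<Prod>j<k. q ^ j)"
  proof (rule prod_mono)
    fix j assume "j \<in> {..<k}"
    then have "j \<le> n" using True by auto
    then have "q ^ n \<le> q ^ j" using q by (intro power_decreasing) auto
    moreover have "(of_real (q ^ n) - of_real (q ^ j) :: complex) = of_real (q ^ n - q ^ j)" by simp
    ultimately show "0 \<le> norm (of_real (q ^ n) - of_real (q ^ j) :: complex) \<and> norm (of_real (q ^ n) - of_real (q ^ j) :: complex) \<le> q ^ j"
      using q by (simp only: norm_of_real) auto
  qed
  finally show ?thesis by (simp add: prod_q_pow)
next
  case False
  then have "n \<in> {..<k}" by auto
  then have "(\<Prod>j<k. (of_real (q ^ n) - of_real (q ^ j) :: complex)) = 0"
    by (intro prod_zero) auto
  then show ?thesis using q by (metis norm_zero zero_le_power less_imp_le)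
qed

lemma W_lim:
  assumes q: "0 < q" "q < 1"
  shows "(\<lambda>n. \<Prod>j<k. (of_real (q ^ n) - of_real (q ^ j) :: complex)) \<longlonglongrightarrow> (-1) ^ k * of_real (q ^ (k choose 2))"
proof -
  have "(\<lambda>n. of_real (q ^ n) :: complex) \<longlonglongrightarrow> of_real 0"
    by (intro tendsto_of_real LIMSEQ_power_zero) (use q in simp)
  then have "(\<lambda>n. \<Prod>j<k. (of_real (q ^ n) - of_real (q ^ j) :: complex)) \<longlonglongrightarrow> (\<Prod>j<k. (of_real 0 - of_real (q ^ j) :: complex))"
    by (intro tendsto_prod tendsto_diff tendsto_const) auto
  also have "(\<Prod>j<k. (of_real 0 - of_real (q ^ j) :: complex)) = (\<Prod>j<k. (-1) * of_real (q ^ j))"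
    by simp
  also have "\<dots> = (-1) ^ k * of_real (q ^ (k choose 2))"
    by (simp add: prod_uminus prod_q_pow[symmetric] del: of_real_power)
  finally show ?thesis .
qed



theorem proposition6:
  fixes q :: real and r s :: nat and \<alpha> :: real
    and a c :: "nat \<Rightarrow> real" and b d :: "nat \<Rightarrow> complex" and z :: complex
  assumes q: "0 < q" "q < 1"
    and rs: "r \<ge> 1" "s \<ge> 1" "r - 1 \<le> s"
    and alpha: "\<forall>m::nat. \<alpha> \<noteq> - real m"
    and a_pos: "\<forall>j\<in>{1..r-1}. a j > 0"
    and c_pos: "\<forall>l\<in>{1..s-1}. c l > 0"
    and ab: "\<forall>j\<in>{1..r-1}. \<forall>n::nat. n \<ge> 1 \<longrightarrow> (\<forall>m::nat. a j * real n + Re (b j) \<noteq> - real m)"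
    and cd: "\<forall>l\<in>{1..s-1}. \<forall>n::nat. n \<ge> 1 \<longrightarrow> (\<forall>m::nat. c l * real n + Re (d l) \<noteq> - real m)"
  shows "(\<lambda>n. basic_hyp
            (qpow q (- of_nat n) # map (\<lambda>j. qpow q (of_real (a j * real n) + b j)) [1..<r])
            (qpow q (of_real \<alpha>) # map (\<lambda>l. qpow q (of_real (c l * real n) + d l)) [1..<s])
            q (of_real (q ^ n) * z))
         \<longlonglongrightarrow>
         (\<Sum>k. ((-1) powi ((int r - int s) * int k))
                * of_real (q powi ((2 + int s - int r) * int (k choose 2)))
                / (qpoch (qpow q (of_real \<alpha>)) q k * qpoch (of_real q) q k) * z ^ k)"
proof -
  define E where "E = s + 1 - r"
  have E: "1 + int s - int r = int E" using rs by (simp add: E_def of_nat_diff)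
  define X where "X j n = qpow q (of_real (a j * real n) + b j)" for j n
  define Y where "Y l n = qpow q (of_real (c l * real n) + d l)" for l n
  define A where "A = qpow q (of_real \<alpha>)"
  define W where "W n k = (\<Prod>j<k. (of_real (q ^ n) - of_real (q ^ j) :: complex))" for n k
  define G where "G k = (-1) powi (int E * int k) * of_real (q powi (int E * int (k choose 2))) * z ^ k
      / (qpoch A q k * qpoch (of_real q) q k)" for k
  define f where "f k n = W n k * (\<Prod>j\<in>{1..<r}. qpoch (X j n) q k) / (\<Prod>l\<in>{1..<s}. qpoch (Y l n) q k) * G k" for k n
  have hyp: "basic_hyp
            (qpow q (- of_nat n) # map (\<lambda>j. qpow q (of_real (a j * real n) + b j)) [1..<r])
            (qpow q (of_real \<alpha>) # map (\<lambda>l. qpow q (of_real (c l * real n) + d l)) [1..<s])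
            q (of_real (q ^ n) * z) = (\<Sum>k. f k n)" for n
  proof -
    have "basic_hyp
            (qpow q (- of_nat n) # map (\<lambda>j. qpow q (of_real (a j * real n) + b j)) [1..<r])
            (qpow q (of_real \<alpha>) # map (\<lambda>l. qpow q (of_real (c l * real n) + d l)) [1..<s])
            q (of_real (q ^ n) * z) = (\<Sum>k. (qpoch (qpow q (- of_nat n)) q k * (\<Prod>j\<in>{1..<r}. qpoch (X j n) q k))
              / (qpoch A q k * (\<Prod>l\<in>{1..<s}. qpoch (Y l n) q k))
              * ((-1) powi (int E * int k)) * of_real (q powi (int E * int (k choose 2)))
              * (of_real (q ^ n) * z) ^ k / qpoch (of_real q) q k)"
      unfolding basic_hyp_def Let_def using rs E
      by (simp add: X_def Y_def A_def prod.distinct_set_conv_list[symmetric] o_def)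
    also have "\<dots> = (\<Sum>k. f k n)"
      by (intro suminf_cong) (simp only: f_def G_def W_def W_eq[OF q(1), symmetric]; simp add: divide_inverse
           inverse_mult_distrib power_mult_distrib mult_ac del: of_real_power)
    finally show ?thesis .
  qed
  define L where "L k = (-1) ^ k * of_real (q ^ (k choose 2)) * 1 / 1 * G k" for k
  have Xlim: "(\<lambda>n. X j n) \<longlonglongrightarrow> 0" if "j \<in> {1..<r}" for j
    unfolding X_def by (rule qpow_tendsto_zero[OF q]) (use a_pos that in auto)
  have Ylim: "(\<lambda>n. Y l n) \<longlonglongrightarrow> 0" if "l \<in> {1..<s}" for l
    unfolding Y_def by (rule qpow_tendsto_zero[OF q]) (use c_pos that in auto)
  have lim: "(\<lambda>n. f k n) \<longlonglongrightarrow> L k" for k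
  proof -
    have 1: "(\<lambda>n. \<Prod>j\<in>{1..<r}. qpoch (X j n) q k) \<longlonglongrightarrow> (\<Prod>j\<in>{1..<r}. 1)"
      by (intro tendsto_prod qpoch_tendsto_one Xlim)
    have 2: "(\<lambda>n. \<Prod>l\<in>{1..<s}. qpoch (Y l n) q k) \<longlonglongrightarrow> (\<Prod>l\<in>{1..<s}. 1)"
      by (intro tendsto_prod qpoch_tendsto_one Ylim)
    show ?thesis
      unfolding f_def L_def W_def
      by (intro tendsto_mult tendsto_divide tendsto_const W_lim[OF q]) (use 1 2 in auto)
  qed
  have Leq: "L k = ((-1) powi ((int r - int s) * int k))
                * of_real (q powi ((2 + int s - int r) * int (k choose 2)))
                / (qpoch (qpow q (of_real \<alpha>)) q k * qpoch (of_real q) q k) * z ^ k" for k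
  proof -
    have e1: "(2 + int s - int r) * int (k choose 2) = int ((E + 1) * (k choose 2))"
    proof -
      have h: "2 + int s - int r = int E + 1" using E by simp
      show ?thesis by (subst h) (simp add: algebra_simps)
    qed
    have e2: "int E * int (k choose 2) = int (E * (k choose 2))" by simp
    have e3: "(-1::complex) powi ((int r - int s) * int k) = (-1) ^ k * (-1) powi (int E * int k)"
    proof -
      have "int r - int s = 1 - int E" using E by simp
      then show ?thesis by (simp add: minus_one_powi even_mult_iff)
    qed
    show ?thesis unfolding L_def G_def A_def e1 e2 e3 power_int_of_nat
      by (simp add: power_add power_mult_distrib)
  qed
  have evX: "\<forall>j\<in>{1..<r}. eventually (\<lambda>n. norm (X j n) \<le> 1/2) sequentially"
  proof
    fix j assume j: "j \<in> {1..<r}"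
    have "eventually (\<lambda>n. norm (X j n) < 1/2) sequentially"
      by (rule order_tendstoD(2)[OF tendsto_norm_zero[OF Xlim[OF j]]]) simp
    then show "eventually (\<lambda>n. norm (X j n) \<le> 1/2) sequentially" by eventually_elim simp
  qed
  have evY: "\<forall>l\<in>{1..<s}. eventually (\<lambda>n. norm (Y l n) \<le> 1/2) sequentially"
  proof
    fix l assume l: "l \<in> {1..<s}"
    have "eventually (\<lambda>n. norm (Y l n) < 1/2) sequentially"
      by (rule order_tendstoD(2)[OF tendsto_norm_zero[OF Ylim[OF l]]]) simp
    then show "eventually (\<lambda>n. norm (Y l n) \<le> 1/2) sequentially" by eventually_elim simp
  qed
  have "eventually (\<lambda>n. (\<forall>j\<in>{1..<r}. norm (X j n) \<le> 1/2) \<and> (\<forall>l\<in>{1..<s}. norm (Y l n) \<le> 1/2)) sequentially"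
    by (intro eventually_conj eventually_ball_finite evX evY) auto
  then obtain N0 where N0: "\<And>n. n \<ge> N0 \<Longrightarrow> (\<forall>j\<in>{1..<r}. norm (X j n) \<le> 1/2) \<and> (\<forall>l\<in>{1..<s}. norm (Y l n) \<le> 1/2)"
    unfolding eventually_sequentially by blast
  have "(\<lambda>J. norm A * q ^ J) \<longlonglongrightarrow> norm A * 0"
    by (intro tendsto_mult_left LIMSEQ_power_zero) (use q in simp)
  then have "eventually (\<lambda>J. norm A * q ^ J < 1/2) sequentially"
    by (rule order_tendstoD(2)) simp
  then obtain J where J: "norm A * q ^ J \<le> 1/2"
    unfolding eventually_sequentially by (meson less_imp_le order_refl)
  have Aeq: "A = of_real (exp (\<alpha> * ln q))"
    unfolding A_def qpow_def by (simp flip: exp_of_real)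
  have Afac: "1 - A * of_real (q ^ j) \<noteq> 0" for j
  proof
    assume "1 - A * of_real (q ^ j) = 0"
    then have "exp (\<alpha> * ln q) * q ^ j = 1" unfolding Aeq
      by (metis eq_iff_diff_eq_0 of_real_eq_1_iff of_real_mult)
    moreover have "exp (\<alpha> * ln q) * q ^ j = exp ((\<alpha> + real j) * ln q)"
      using q by (simp add: distrib_right exp_add exp_of_nat_mult)
    ultimately have "(\<alpha> + real j) * ln q = 0" by simp
    moreover have "ln q \<noteq> 0" using q by simp
    ultimately have "\<alpha> = - real j" by simp
    then show False using alpha by blast
  qed
  define c0 where "c0 = norm (qpoch A q J)"
  have c0: "c0 > 0" unfolding c0_def qpoch_def using Afac by simp
  have Abound: "norm (qpoch A q k) \<ge> c0 * (1/2) ^ k" if "k \<ge> J" for k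
  proof -
    have "c0 * (1/2) ^ k \<le> c0 * (1/2) ^ (k - J)"
      using c0 by (intro mult_left_mono power_decreasing) auto
    also have "\<dots> \<le> norm (qpoch A q k)"
      unfolding c0_def by (rule qpoch_lower_from[OF q J that])
    finally show ?thesis .
  qed
  define B where "B = 2 ^ (r - 1) * 2 ^ (s - 1) * 2 * norm z / (1 - q)"
  have B: "B \<ge> 0" unfolding B_def using q by simp
  define M where "M k = q ^ (k choose 2) * B ^ k / c0" for k
  have Msum: "summable M"
  proof -
    have "(\<lambda>k. q ^ k * B) \<longlonglongrightarrow> 0 * B"
      by (intro tendsto_mult_right LIMSEQ_power_zero) (use q in simp)
    then have "eventually (\<lambda>k. q ^ k * B < 1/2) sequentially"
      by (rule order_tendstoD(2)) simp
    then obtain N1 where N1: "\<And>k. k \<ge> N1 \<Longrightarrow> q ^ k * B < 1/2"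
      unfolding eventually_sequentially by blast
    show ?thesis
    proof (rule summable_ratio_test[of "1/2" N1])
      fix k assume k: "k \<ge> N1"
      have ch: "Suc k choose 2 = k + (k choose 2)"
        using binomial_Suc_Suc[of k 1] by (simp add: numeral_2_eq_2)
      have "M (Suc k) = M k * (q ^ k * B)"
        unfolding M_def ch by (simp add: power_add field_simps)
      moreover have "M k \<ge> 0" unfolding M_def using q B c0 by simp
      moreover have "M k * (q ^ k * B) \<le> M k * (1/2)"
        using N1[OF k] \<open>M k \<ge> 0\<close> by (intro mult_left_mono) auto
      ultimately show "norm (M (Suc k)) \<le> 1/2 * norm (M k)"
        using q B by (simp add: abs_of_nonneg)
    qed simp
  qed
  have bnd: "norm (f k n) \<le> M k" if k: "k \<ge> J" and n: "n \<ge> N0" for k n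
  proof -
    have nW: "norm (W n k) \<le> q ^ (k choose 2)" unfolding W_def by (rule W_bound[OF q])
    have nN: "norm (\<Prod>j\<in>{1..<r}. qpoch (X j n) q k) \<le> (2 ^ k) ^ (r - 1)"
    proof -
      have "norm (\<Prod>j\<in>{1..<r}. qpoch (X j n) q k) = (\<Prod>j\<in>{1..<r}. norm (qpoch (X j n) q k))"
        by (simp add: prod_norm)
      also have "\<dots> \<le> (\<Prod>j\<in>{1..<r}. 2 ^ k)"
        by (intro prod_mono conjI norm_ge_zero qpoch_upper[OF q]) (use N0[OF n] in fastforce)
      finally show ?thesis by simp
    qed
    have nD: "norm (\<Prod>l\<in>{1..<s}. qpoch (Y l n) q k) \<ge> ((1/2) ^ k) ^ (s - 1)"
    proof -
      have "norm (\<Prod>l\<in>{1..<s}. qpoch (Y l n) q k) = (\<Prod>l\<in>{1..<s}. norm (qpoch (Y l n) q k))"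
        by (simp add: prod_norm)
      also have "\<dots> \<ge> (\<Prod>l\<in>{1..<s}. (1/2) ^ k)"
        by (intro prod_mono conjI qpoch_lower_half[OF q]) (use N0[OF n] in auto)
      finally show ?thesis by simp
    qed
    have nG: "norm (G k) \<le> norm z ^ k / (c0 * (1/2) ^ k * (1 - q) ^ k)"
    proof -
      have s1: "norm ((-1::complex) powi (int E * int k)) = 1" by (simp add: minus_one_powi)
      have s2: "norm (of_real (q powi (int E * int (k choose 2))) :: complex) \<le> 1"
      proof -
        have "q powi (int E * int (k choose 2)) = q ^ (E * (k choose 2))"
          by (simp add: power_int_of_nat flip: of_nat_mult)
        then show ?thesis using q by (simp add: power_le_one norm_power)
      qed
      have "norm (G k) = norm ((-1::complex) powi (int E * int k)) * norm (of_real (q powi (int E * int (k choose 2))) :: complex)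
           * norm z ^ k / (norm (qpoch A q k) * norm (qpoch (of_real q) q k))"
        unfolding G_def by (simp add: norm_mult norm_divide norm_power del: norm_of_real)
      also have "\<dots> \<le> 1 * 1 * norm z ^ k / (c0 * (1/2) ^ k * (1 - q) ^ k)"
        using c0 q by (intro frac_le mult_mono Abound[OF k] qpoch_q_lower[OF q] s2) (auto simp: s1)
      finally show ?thesis by simp
    qed
    have "norm (f k n) = norm (W n k) * norm (\<Prod>j\<in>{1..<r}. qpoch (X j n) q k)
           / norm (\<Prod>l\<in>{1..<s}. qpoch (Y l n) q k) * norm (G k)"
      unfolding f_def by (simp add: norm_mult norm_divide del: prod_norm)
    also have "\<dots> \<le> q ^ (k choose 2) * (2 ^ k) ^ (r - 1) / ((1/2) ^ k) ^ (s - 1)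
                   * (norm z ^ k / (c0 * (1/2) ^ k * (1 - q) ^ k))"
      using q c0 by (intro mult_mono frac_le nW nN nD nG) auto
    also have "\<dots> = M k"
      unfolding M_def B_def using q c0
      by (simp add: field_simps power_mult_distrib power_divide flip: power_mult)
    finally show ?thesis .
  qed
  have Mbound: "eventually (\<lambda>(k,n). norm (f k n) \<le> M k) (at_top \<times>\<^sub>F sequentially)"
    unfolding eventually_prod_sequentially
    using bnd by (intro exI[of _ "max J N0"]) auto
  have "(\<lambda>n. suminf (\<lambda>k. f k n)) \<longlonglongrightarrow> suminf L"
    using tannerys_theorem[OF lim Mbound Msum] by simp
  then show ?thesis unfolding hyp Leq .
qed

end
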